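(* For every $j\in\{1,\dots,N\}$ with $S_j\neq\emptyset$, let $V^{(j),\rm opt}$ be the optimal value of (P1) with pairs restricted to $\mathcal M^{\rm narrow}$ and metric $p$ replaced by $p_1^{(j)}$. Then $p_2^{(j-1)}(U_j^*,c_j^* )\ge V^{(j),\rm opt}/(T+1+\Delta+2J)$.
   Context: Setup as for problem (P1): users $\{1,\dots,K\}$ partitioned into groups $\mathcal G_1,\dots,\mathcal G_L$; $N$ RBs; chunks are vectors $c\in\{0,1\}^N$ whose ones form a nonempty contiguous block, ${\rm Tail}(c)$ the last index of $c$, chunks intersect if they share an index; $\mathcal U$ = nonempty $U\subseteq\{1,\dots,K\}$ with $|U|\le T$, $|U\cap\mathcal G_s|\le1\ \forall s$; pairs are elements of $\mathcal U\times\mathcal C$. Metrics $p\ge0$; weights $\beta^q\in[0,1]$ ($q=1,\dots,J$); binary weights $\alpha^q\in\{0,1\}$ ($q\in\mathcal I$) with $\sum_{q\in\mathcal I}\alpha^q(U,c)\le\Delta$ per pair. A set $F$ of pairs is feasible if each group meets $U$ for at most one element of $F$, each RB lies in $c$ for at most one element, $\sum_F\beta^q\le1$ ($q\le J$) and $\sum_F\alpha^q\le1$ ($q\in\mathcal I$); (P1) maximizes the sum of the metric over feasible $F$. Pairs $(U,c),(U',c')$ conflict if some group meets both $U,U'$, or $c,c'$ intersect, or some $q\in\mathcal I$ has $\alpha^q(U,c)=\alpha^q(U',c')=1$. $\mathcal M^{\rm narrow}$ = pairs with $\beta^q\le1/2$ for all $q\le J$; $\max_q\beta^q:=0$ if $J=0$;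 $(x)^+=\max\{x,0\}$. Recursion: $p_2^{(0)}=p$ on $\mathcal M^{\rm narrow}$. For $j=1,\dots,N$: let $(U_j^*,c_j^* )$ maximize $p_2^{(j-1)}$ over pairs of $\mathcal M^{\rm narrow}$ with ${\rm Tail}(c)=j$; $S_j=(U_j^*,c_j^* )$ if $p_2^{(j-1)}(U_j^*,c_j^* )>0$, else $S_j=\emptyset$. For $(U,c)\in\mathcal M^{\rm narrow}$, $p_1^{(j)}(U,c)=(p_2^{(j-1)}(U_j^*,c_j^* ))^+\mathbf 1[p_2^{(j-1)}(U,c)>0]$ if $(U,c)$ conflicts with $(U_j^*,c_j^* )$, and $p_1^{(j)}(U,c)=2(p_2^{(j-1)}(U_j^*,c_j^* ))^+\mathbf 1[p_2^{(j-1)}(U,c)>0]\max_{q\le J}\beta^q(U,c)$ otherwise; $p_2^{(j)}=p_2^{(j-1)}-p_1^{(j)}$. *)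

theory Defs
  imports Complex_Main
begin

text \<open>A pair is (U, c): a user set U and a chunk c, the chunk being represented by
  its support (the set of RB indices where the 0/1 vector equals 1).\<close>
type_synonym pair = "nat set \<times> nat set"

definition chunks :: "nat \<Rightarrow> nat set set" where
  "chunks N = {{a..b} | a b. 1 \<le> a \<and> a \<le> b \<and> b \<le> N}"

definition Tail :: "nat set \<Rightarrow> nat" where
  "Tail c = Max c"

definition users :: "nat \<Rightarrow> nat \<Rightarrow> nat \<Rightarrow> (nat \<Rightarrow> nat set) \<Rightarrow> nat set set" where
  "users K L T G = {U. U \<noteq> {} \<and> U \<subseteq> {1..K} \<and> card U \<le> T \<and>
                        (\<forall>s\<in>{1..L}. card (U \<inter> G s) \<le> 1)}"

definition pairs :: "nat \<Rightarrow> nat \<Rightarrow> nat \<Rightarrow> (nat \<Rightarrow> nat set) \<Rightarrow> nat \<Rightarrow> pair set" where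
  "pairs K L T G N = users K L T G \<times> chunks N"

definition narrow :: "nat \<Rightarrow> nat \<Rightarrow> nat \<Rightarrow> (nat \<Rightarrow> nat set) \<Rightarrow> nat \<Rightarrow>
                      nat \<Rightarrow> (nat \<Rightarrow> pair \<Rightarrow> real) \<Rightarrow> pair set" where
  "narrow K L T G N J \<beta> = {x \<in> pairs K L T G N. \<forall>q\<in>{1..J}. \<beta> q x \<le> 1/2}"

definition maxbeta :: "nat \<Rightarrow> (nat \<Rightarrow> pair \<Rightarrow> real) \<Rightarrow> pair \<Rightarrow> real" where
  "maxbeta J \<beta> x = (if J = 0 then 0 else Max ((\<lambda>q. \<beta> q x) ` {1..J}))"

definition conflict :: "nat \<Rightarrow> (nat \<Rightarrow> nat set) \<Rightarrow> nat set \<Rightarrow> (nat \<Rightarrow> pair \<Rightarrow> real)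
                        \<Rightarrow> pair \<Rightarrow> pair \<Rightarrow> bool" where
  "conflict L G I \<alpha> x y \<longleftrightarrow>
     (\<exists>s\<in>{1..L}. fst x \<inter> G s \<noteq> {} \<and> fst y \<inter> G s \<noteq> {}) \<or>
     snd x \<inter> snd y \<noteq> {} \<or>
     (\<exists>q\<in>I. \<alpha> q x = 1 \<and> \<alpha> q y = 1)"

definition feasible :: "nat \<Rightarrow> (nat \<Rightarrow> nat set) \<Rightarrow> nat \<Rightarrow> nat \<Rightarrow> (nat \<Rightarrow> pair \<Rightarrow> real)
                        \<Rightarrow> nat set \<Rightarrow> (nat \<Rightarrow> pair \<Rightarrow> real) \<Rightarrow> pair set \<Rightarrow> bool" where
  "feasible L G N J \<beta> I \<alpha> F \<longleftrightarrow>
     (\<forall>s\<in>{1..L}. card {x\<in>F. fst x \<inter> G s \<noteq> {}} \<le> 1) \<and>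
     (\<forall>n\<in>{1..N}. card {x\<in>F. n \<in> snd x} \<le> 1) \<and>
     (\<forall>q\<in>{1..J}. (\<Sum>x\<in>F. \<beta> q x) \<le> 1) \<and>
     (\<forall>q\<in>I. (\<Sum>x\<in>F. \<alpha> q x) \<le> 1)"

definition opt_val :: "pair set \<Rightarrow> nat \<Rightarrow> (nat \<Rightarrow> nat set) \<Rightarrow> nat \<Rightarrow> nat \<Rightarrow> (nat \<Rightarrow> pair \<Rightarrow> real)
                        \<Rightarrow> nat set \<Rightarrow> (nat \<Rightarrow> pair \<Rightarrow> real) \<Rightarrow> (pair \<Rightarrow> real) \<Rightarrow> real" where
  "opt_val M L G N J \<beta> I \<alpha> f =
     Max {(\<Sum>x\<in>F. f x) | F. F \<subseteq> M \<and> feasible L G N J \<beta> I \<alpha> F}"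

text \<open>p_1^{(j)} given q2 = p_2^{(j-1)} and the selected pair s = (U_j^*, c_j^*).\<close>
definition rec_p1 :: "nat \<Rightarrow> (nat \<Rightarrow> nat set) \<Rightarrow> nat set \<Rightarrow> (nat \<Rightarrow> pair \<Rightarrow> real) \<Rightarrow> nat
                      \<Rightarrow> (nat \<Rightarrow> pair \<Rightarrow> real) \<Rightarrow> (pair \<Rightarrow> real) \<Rightarrow> pair \<Rightarrow> pair \<Rightarrow> real" where
  "rec_p1 L G I \<alpha> J \<beta> q2 s x =
     (if conflict L G I \<alpha> s x
      then max (q2 s) 0 * (if q2 x > 0 then 1 else 0)
      else 2 * max (q2 s) 0 * (if q2 x > 0 then 1 else 0) * maxbeta J \<beta> x)"

end

theory Submission
  imports Defs
begin

lemma chunk_facts: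
  assumes "c \<in> chunks N"
  obtains a b where "c = {a..b}" "1 \<le> a" "a \<le> b" "b \<le> N" "Tail c = b"
proof -
  obtain a b where "c = {a..b}" "1 \<le> a" "a \<le> b" "b \<le> N" using assms unfolding chunks_def by auto
  moreover have "Max {a..b} = b" using \<open>a \<le> b\<close> by (intro Max_eqI) auto
  ultimately show ?thesis using that unfolding Tail_def by blast
qed

lemma finite_pairs: "finite (pairs K L T G N)"
proof -
  have "users K L T G \<subseteq> Pow {1..K}" unfolding users_def by auto
  hence f1: "finite (users K L T G)" by (rule finite_subset) simp
  have "chunks N \<subseteq> Pow {1..N}" unfolding chunks_def by auto
  hence f2: "finite (chunks N)" by (rule finite_subset) simp
  show ?thesis unfolding pairs_def using f1 f2 by simp
qed

lemma maxbeta_nonneg: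
  assumes "\<forall>q\<in>{1..J}. 0 \<le> \<beta> q x"
  shows "0 \<le> maxbeta J \<beta> x"
proof (cases "J = 0")
  case True thus ?thesis by (simp add: maxbeta_def)
next
  case False
  hence "1 \<in> {1..J}" by simp
  hence "\<beta> 1 x \<le> Max ((\<lambda>q. \<beta> q x) ` {1..J})" by (intro Max_ge) auto
  moreover have "0 \<le> \<beta> 1 x" using assms \<open>1 \<in> {1..J}\<close> by auto
  ultimately have "0 \<le> Max ((\<lambda>q. \<beta> q x) ` {1..J})" by linarith
  thus ?thesis using False unfolding maxbeta_def by (simp only: if_False)
qed

lemma maxbeta_le_sum:
  assumes "\<forall>q\<in>{1..J}. 0 \<le> \<beta> q x"
  shows "maxbeta J \<beta> x \<le> (\<Sum>q\<in>{1..J}. \<beta> q x)"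
proof (cases "J = 0")
  case True thus ?thesis by (simp add: maxbeta_def)
next
  case False
  have "Max ((\<lambda>q. \<beta> q x) ` {1..J}) \<in> (\<lambda>q. \<beta> q x) ` {1..J}"
    using False by (intro Max_in) auto
  then obtain q where q: "q \<in> {1..J}" "Max ((\<lambda>q. \<beta> q x) ` {1..J}) = \<beta> q x" by auto
  have "\<beta> q x \<le> (\<Sum>q\<in>{1..J}. \<beta> q x)"
    using q(1) assms by (intro member_le_sum) auto
  thus ?thesis using q False by (simp add: maxbeta_def)
qed

lemma rec_p1_nonneg:
  assumes "\<forall>q\<in>{1..J}. 0 \<le> \<beta> q x"
  shows "0 \<le> rec_p1 L G I \<alpha> J \<beta> q2 s x"
  using maxbeta_nonneg[of J \<beta> x, OF assms] unfolding rec_p1_def by auto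

lemma card_le1_of_sum:
  assumes "finite F" "\<forall>x\<in>F. a x = 0 \<or> a x = 1" "(\<Sum>x\<in>F. a x) \<le> (1::real)"
  shows "card {x\<in>F. a x = 1} \<le> 1"
proof -
  have "(\<Sum>x\<in>{x\<in>F. a x = 1}. a x) \<le> (\<Sum>x\<in>F. a x)"
    using assms(1,2) by (intro sum_mono2) auto
  moreover have "(\<Sum>x\<in>{x\<in>F. a x = 1}. a x) = real (card {x\<in>F. a x = 1})" by simp
  ultimately show ?thesis using assms(3) by linarith
qed

lemma card_le1_imp:
  assumes "finite A" "card A \<le> 1" "x \<in> A" "y \<in> A"
  shows "x = y"
  using assms by (metis One_nat_def card_le_Suc0_iff_eq)

theorem lemma2:
  fixes K L N T J \<Delta> :: nat
    and G :: "nat \<Rightarrow> nat set"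
    and I :: "nat set"
    and p :: "pair \<Rightarrow> real"
    and \<beta> \<alpha> :: "nat \<Rightarrow> pair \<Rightarrow> real"
    and p2 :: "nat \<Rightarrow> pair \<Rightarrow> real"
    and star :: "nat \<Rightarrow> pair"
    and j :: nat
  defines "M \<equiv> narrow K L T G N J \<beta>"
  assumes groups_nonempty: "\<forall>s\<in>{1..L}. G s \<noteq> {}"
    and groups_disjoint: "\<forall>s\<in>{1..L}. \<forall>t\<in>{1..L}. s \<noteq> t \<longrightarrow> G s \<inter> G t = {}"
    and groups_cover: "(\<Union>s\<in>{1..L}. G s) = {1..K}"
    and p_nonneg: "\<forall>x\<in>pairs K L T G N. p x \<ge> 0"
    and beta_range: "\<forall>q\<in>{1..J}. \<forall>x\<in>pairs K L T G N. 0 \<le> \<beta> q x \<and> \<beta> q x \<le> 1"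
    and I_finite: "finite I"
    and alpha_binary: "\<forall>q\<in>I. \<forall>x\<in>pairs K L T G N. \<alpha> q x = 0 \<or> \<alpha> q x = 1"
    and alpha_sum: "\<forall>x\<in>pairs K L T G N. (\<Sum>q\<in>I. \<alpha> q x) \<le> real \<Delta>"
    and p2_init: "\<forall>x\<in>M. p2 0 x = p x"
    and star_max: "\<forall>i\<in>{1..N}. {x\<in>M. Tail (snd x) = i} \<noteq> {} \<longrightarrow>
         star i \<in> M \<and> Tail (snd (star i)) = i \<and>
         (\<forall>x\<in>M. Tail (snd x) = i \<longrightarrow> p2 (i - 1) x \<le> p2 (i - 1) (star i))"
    and p2_step: "\<forall>i\<in>{1..N}. {x\<in>M. Tail (snd x) = i} \<noteq> {} \<longrightarrow>
         (\<forall>x\<in>M. p2 i x = p2 (i - 1) x - rec_p1 L G I \<alpha> J \<beta> (p2 (i - 1)) (star i) x)"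
    and p2_step_empty: "\<forall>i\<in>{1..N}. {x\<in>M. Tail (snd x) = i} = {} \<longrightarrow>
         (\<forall>x\<in>M. p2 i x = p2 (i - 1) x)"
    and j_range: "j \<in> {1..N}"
    and S_nonempty: "{x\<in>M. Tail (snd x) = j} \<noteq> {}" "p2 (j - 1) (star j) > 0"
  shows "p2 (j - 1) (star j) \<ge>
           opt_val M L G N J \<beta> I \<alpha> (rec_p1 L G I \<alpha> J \<beta> (p2 (j - 1)) (star j))
           / (real T + 1 + real \<Delta> + 2 * real J)"
proof -
  have Msub: "M \<subseteq> pairs K L T G N" unfolding M_def narrow_def by auto
  have finM: "finite M" using finite_subset[OF Msub finite_pairs] .
  have beta_nn: "\<And>x q. x \<in> M \<Longrightarrow> q \<in> {1..J} \<Longrightarrow> 0 \<le> \<beta> q x"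
    using beta_range Msub by blast
  have p1_nn: "\<And>x q2 s. x \<in> M \<Longrightarrow> 0 \<le> rec_p1 L G I \<alpha> J \<beta> q2 s x"
    using beta_nn by (intro rec_p1_nonneg) blast
  have chM: "\<And>x. x \<in> M \<Longrightarrow> snd x \<in> chunks N" using Msub unfolding pairs_def by auto
  have usM: "\<And>x. x \<in> M \<Longrightarrow> fst x \<in> users K L T G" using Msub unfolding pairs_def by auto
  have mono1: "\<And>i x. i \<in> {1..N} \<Longrightarrow> x \<in> M \<Longrightarrow> p2 i x \<le> p2 (i - 1) x"
  proof -
    fix i x assume i: "i \<in> {1..N}" and x: "x \<in> M"
    show "p2 i x \<le> p2 (i - 1) x"
    proof (cases "{x\<in>M. Tail (snd x) = i} = {}")
      case True thus ?thesis using p2_step_empty i x by auto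
    next
      case False thus ?thesis using p2_step i x p1_nn[OF x] by fastforce
    qed
  qed
  have monok: "\<And>k x. i \<le> k \<Longrightarrow> k \<le> N \<Longrightarrow> x \<in> M \<Longrightarrow> p2 k x \<le> p2 i x" for i
  proof -
    fix k x assume "i \<le> k" "k \<le> N" "x \<in> M"
    thus "p2 k x \<le> p2 i x"
    proof (induction k rule: dec_induct)
      case base thus ?case by simp
    next
      case (step k)
      have "p2 (Suc k) x \<le> p2 (Suc k - 1) x" using mono1[of "Suc k" x] step by auto
      thus ?case using step by simp
    qed
  qed
  have kill: "\<And>x. x \<in> M \<Longrightarrow> p2 (Tail (snd x)) x \<le> 0"
  proof -
    fix x assume x: "x \<in> M"
    define i where "i = Tail (snd x)"
    obtain a b where ab: "snd x = {a..b}" "1 \<le> a" "a \<le> b" "b \<le> N" "Tail (snd x) = b"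
      using chunk_facts[OF chM[OF x]] by blast
    have i: "i \<in> {1..N}" using ab i_def by auto
    have "x \<in> {x\<in>M. Tail (snd x) = i}" using x i_def by simp
    hence ne: "{x\<in>M. Tail (snd x) = i} \<noteq> {}" by blast
    have sm: "star i \<in> M" "Tail (snd (star i)) = i"
      "\<forall>y\<in>M. Tail (snd y) = i \<longrightarrow> p2 (i - 1) y \<le> p2 (i - 1) (star i)"
      using star_max i ne by blast+
    obtain a' b' where ab': "snd (star i) = {a'..b'}" "a' \<le> b'" "Tail (snd (star i)) = b'"
      using chunk_facts[OF chM[OF sm(1)]] by blast
    have "i \<in> snd x \<inter> snd (star i)" using ab ab' sm(2) i_def by auto
    hence conf: "conflict L G I \<alpha> (star i) x" unfolding conflict_def by auto
    have eq: "p2 i x = p2 (i - 1) x - rec_p1 L G I \<alpha> J \<beta> (p2 (i - 1)) (star i) x"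
      using p2_step i ne x by blast
    have le: "p2 (i - 1) x \<le> p2 (i - 1) (star i)" using sm(3) x i_def by auto
    have "p2 i x \<le> 0" using eq le conf unfolding rec_p1_def by (auto split: if_splits)
    thus "p2 (Tail (snd x)) x \<le> 0" using i_def by simp
  qed
  have pos_tail: "\<And>x. x \<in> M \<Longrightarrow> p2 (j - 1) x > 0 \<Longrightarrow> j \<le> Tail (snd x)"
  proof (rule ccontr)
    fix x assume x: "x \<in> M" and pos: "p2 (j - 1) x > 0" and n: "\<not> j \<le> Tail (snd x)"
    obtain a b where ab: "snd x = {a..b}" "1 \<le> a" "a \<le> b" "b \<le> N" "Tail (snd x) = b"
      using chunk_facts[OF chM[OF x]] by blast
    have "p2 (j - 1) x \<le> p2 (Tail (snd x)) x"
      using monok[of "Tail (snd x)" "j - 1" x] n j_range x by auto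
    thus False using kill[OF x] pos by simp
  qed
  define s where "s = star j"
  define w where "w = p2 (j - 1) s"
  define f where "f = rec_p1 L G I \<alpha> J \<beta> (p2 (j - 1)) s"
  define D where "D = real T + 1 + real \<Delta> + 2 * real J"
  have wpos: "w > 0" using S_nonempty(2) unfolding w_def s_def .
  have sM: "s \<in> M" and sT: "Tail (snd s) = j" using star_max j_range S_nonempty(1) unfolding s_def by blast+
  have sP: "s \<in> pairs K L T G N" using sM Msub by auto
  have sU: "fst s \<in> users K L T G" using usM[OF sM] .
  have finU: "finite (fst s)" using sU unfolding users_def by (auto intro: finite_subset)
  have cardU: "card (fst s) \<le> T" using sU unfolding users_def by auto
  have Usub: "fst s \<subseteq> {1..K}" using sU unfolding users_def by auto
  define Gs where "Gs = {g\<in>{1..L}. fst s \<inter> G g \<noteq> {}}"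
  have cardGs: "card Gs \<le> T"
  proof -
    define h where "h g = (SOME u. u \<in> fst s \<inter> G g)" for g
    have hin: "\<And>g. g \<in> Gs \<Longrightarrow> h g \<in> fst s \<inter> G g"
      unfolding h_def Gs_def by (rule someI_ex) auto
    have "inj_on h Gs"
    proof (rule inj_onI)
      fix g1 g2 assume g: "g1 \<in> Gs" "g2 \<in> Gs" "h g1 = h g2"
      hence "h g1 \<in> G g1 \<inter> G g2" using hin[of g1] hin[of g2] by auto
      thus "g1 = g2" using groups_disjoint g unfolding Gs_def by blast
    qed
    moreover have "h ` Gs \<subseteq> fst s" using hin by auto
    ultimately have "card Gs \<le> card (fst s)" using finU by (intro card_inj_on_le) auto
    thus ?thesis using cardU by simp
  qed
  define Iq where "Iq = {q\<in>I. \<alpha> q s = 1}"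
  have cardIq: "card Iq \<le> \<Delta>"
  proof -
    have "(\<Sum>q\<in>Iq. \<alpha> q s) \<le> (\<Sum>q\<in>I. \<alpha> q s)"
      using I_finite alpha_binary sP unfolding Iq_def by (intro sum_mono2) fastforce+
    moreover have "(\<Sum>q\<in>Iq. \<alpha> q s) = real (card Iq)" unfolding Iq_def by simp
    ultimately show ?thesis using alpha_sum sP by force
  qed
  have bound: "(\<Sum>x\<in>F. f x) \<le> D * w" if FM: "F \<subseteq> M" and feas: "feasible L G N J \<beta> I \<alpha> F" for F
  proof -
    have finF: "finite F" using finite_subset[OF FM finM] .
    define A where "A = {x\<in>F. conflict L G I \<alpha> s x \<and> p2 (j - 1) x > 0}"
    have pt: "f x \<le> (if x \<in> A then w else 0) + 2 * w * (\<Sum>q\<in>{1..J}. \<beta> q x)" if x: "x \<in> F" for x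
    proof -
      have xM: "x \<in> M" using x FM by auto
      have bn: "\<forall>q\<in>{1..J}. 0 \<le> \<beta> q x" using beta_nn[OF xM] by auto
      have m0: "0 \<le> maxbeta J \<beta> x" using maxbeta_nonneg[of J \<beta> x, OF bn] .
      have m1: "maxbeta J \<beta> x \<le> (\<Sum>q\<in>{1..J}. \<beta> q x)" using maxbeta_le_sum[of J \<beta> x, OF bn] .
      have s0: "0 \<le> (\<Sum>q\<in>{1..J}. \<beta> q x)" using bn by (intro sum_nonneg) auto
      have "2 * w * maxbeta J \<beta> x \<le> 2 * w * (\<Sum>q\<in>{1..J}. \<beta> q x)"
        using m1 wpos by (intro mult_left_mono) auto
      moreover have "0 \<le> 2 * w * maxbeta J \<beta> x" using m0 wpos by simp
      moreover have "0 \<le> 2 * w * (\<Sum>q\<in>{1..J}. \<beta> q x)" using s0 wpos by simp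
      ultimately show ?thesis using wpos x s0
        unfolding f_def rec_p1_def A_def w_def by (auto simp: max_def)
    qed
    have "(\<Sum>x\<in>F. f x) \<le> (\<Sum>x\<in>F. (if x \<in> A then w else 0) + 2 * w * (\<Sum>q\<in>{1..J}. \<beta> q x))"
      using pt by (rule sum_mono)
    also have "\<dots> = w * real (card A) + 2 * w * (\<Sum>q\<in>{1..J}. \<Sum>x\<in>F. \<beta> q x)"
    proof -
      have "(\<Sum>x\<in>F. (if x \<in> A then w else 0)) = w * real (card A)"
        using finF unfolding A_def by (simp add: sum.If_cases Int_def)
      moreover have "(\<Sum>x\<in>F. 2 * w * (\<Sum>q\<in>{1..J}. \<beta> q x)) = 2 * w * (\<Sum>q\<in>{1..J}. \<Sum>x\<in>F. \<beta> q x)"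
        by (simp add: sum_distrib_left sum.swap[of _ _ F])
      ultimately show ?thesis by (simp add: sum.distrib)
    qed
    also have "\<dots> \<le> w * real (T + 1 + \<Delta>) + 2 * w * real J"
    proof -
      have "(\<Sum>q\<in>{1..J}. \<Sum>x\<in>F. \<beta> q x) \<le> (\<Sum>q\<in>{1..J}. 1)"
        using feas unfolding feasible_def by (intro sum_mono) auto
      hence b1: "(\<Sum>q\<in>{1..J}. \<Sum>x\<in>F. \<beta> q x) \<le> real J" by simp
      define A1 where "A1 = (\<Union>g\<in>Gs. {x\<in>F. fst x \<inter> G g \<noteq> {}})"
      define A2 where "A2 = {x\<in>F. j \<in> snd x}"
      define A3 where "A3 = (\<Union>q\<in>Iq. {x\<in>F. \<alpha> q x = 1})"
      have sub: "A \<subseteq> A1 \<union> A2 \<union> A3"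
      proof
        fix x assume xA: "x \<in> A"
        hence xF: "x \<in> F" and cf: "conflict L G I \<alpha> s x" and pos: "p2 (j - 1) x > 0"
          unfolding A_def by auto
        have xM: "x \<in> M" using xF FM by auto
        consider (g) "\<exists>g\<in>{1..L}. fst s \<inter> G g \<noteq> {} \<and> fst x \<inter> G g \<noteq> {}"
          | (c) "snd s \<inter> snd x \<noteq> {}" | (a) "\<exists>q\<in>I. \<alpha> q s = 1 \<and> \<alpha> q x = 1"
          using cf unfolding conflict_def by blast
        thus "x \<in> A1 \<union> A2 \<union> A3"
        proof cases
          case g thus ?thesis using xF unfolding A1_def Gs_def by blast
        next
          case c
          obtain a b where ab: "snd x = {a..b}" "Tail (snd x) = b"
            using chunk_facts[OF chM[OF xM]] by blast
          obtain a' b' where ab': "snd s = {a'..b'}" "Tail (snd s) = b'"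
            using chunk_facts[OF chM[OF sM]] by blast
          have "j \<le> b" using pos_tail[OF xM pos] ab by simp
          moreover have "b' = j" using ab' sT by simp
          ultimately have "j \<in> snd x" using c ab ab' by auto
          thus ?thesis using xF unfolding A2_def by blast
        next
          case a thus ?thesis using xF unfolding A3_def Iq_def by blast
        qed
      qed
      have finA: "finite A1" "finite A2" "finite A3"
      proof -
        have "A1 \<subseteq> F" "A2 \<subseteq> F" "A3 \<subseteq> F" unfolding A1_def A2_def A3_def by auto
        thus "finite A1" "finite A2" "finite A3" using finF finite_subset by blast+
      qed
      have c1: "card A1 \<le> T"
      proof -
        have "card A1 \<le> (\<Sum>g\<in>Gs. card {x\<in>F. fst x \<inter> G g \<noteq> {}})"
          unfolding A1_def by (rule card_UN_le) (simp add: Gs_def)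
        also have "\<dots> \<le> (\<Sum>g\<in>Gs. 1)"
          using feas unfolding feasible_def Gs_def by (intro sum_mono) auto
        finally show ?thesis using cardGs by simp
      qed
      have c2: "card A2 \<le> 1" using feas j_range unfolding feasible_def A2_def by auto
      have c3: "card A3 \<le> \<Delta>"
      proof -
        have "card A3 \<le> (\<Sum>q\<in>Iq. card {x\<in>F. \<alpha> q x = 1})"
          unfolding A3_def by (rule card_UN_le) (simp add: Iq_def I_finite)
        also have "\<dots> \<le> (\<Sum>q\<in>Iq. 1)"
        proof (intro sum_mono)
          fix q assume q: "q \<in> Iq"
          show "card {x\<in>F. \<alpha> q x = 1} \<le> 1"
          proof (rule card_le1_of_sum[OF finF])
            show "\<forall>x\<in>F. \<alpha> q x = 0 \<or> \<alpha> q x = 1" using alpha_binary q FM Msub unfolding Iq_def by blast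
            show "(\<Sum>x\<in>F. \<alpha> q x) \<le> 1" using feas q unfolding feasible_def Iq_def by auto
          qed
        qed
        finally show ?thesis using cardIq by simp
      qed
      have "card A \<le> card (A1 \<union> A2 \<union> A3)" using sub finA by (intro card_mono) auto
      also have "\<dots> \<le> card A1 + card A2 + card A3" by (meson card_Un_le le_trans add_le_mono order_refl)
      finally have "card A \<le> T + 1 + \<Delta>" using c1 c2 c3 by linarith
      hence "real (card A) \<le> real (T + 1 + \<Delta>)" by linarith
      hence "w * real (card A) \<le> w * real (T + 1 + \<Delta>)" using wpos by (intro mult_left_mono) auto
      moreover have "2 * w * (\<Sum>q\<in>{1..J}. \<Sum>x\<in>F. \<beta> q x) \<le> 2 * w * real J"
        using b1 wpos by (intro mult_left_mono) auto
      ultimately show ?thesis by linarith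
    qed
    also have "\<dots> = D * w" unfolding D_def by (simp add: algebra_simps)
    finally show ?thesis .
  qed
  define S where "S = {(\<Sum>x\<in>F. f x) | F. F \<subseteq> M \<and> feasible L G N J \<beta> I \<alpha> F}"
  have finS: "finite S"
  proof -
    have "S \<subseteq> (\<lambda>F. \<Sum>x\<in>F. f x) ` Pow M" unfolding S_def by auto
    thus ?thesis using finM by (auto intro: finite_subset)
  qed
  have neS: "S \<noteq> {}"
  proof -
    have "feasible L G N J \<beta> I \<alpha> {}" unfolding feasible_def by simp
    hence "(\<Sum>x\<in>{}. f x) \<in> S" unfolding S_def by blast
    thus ?thesis by blast
  qed
  have "Max S \<le> D * w" using finS neS bound unfolding S_def by (auto simp: Max_le_iff)
  moreover have "opt_val M L G N J \<beta> I \<alpha> f = Max S" unfolding opt_val_def S_def by simp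
  moreover have "D > 0" unfolding D_def by simp
  ultimately have "opt_val M L G N J \<beta> I \<alpha> f / D \<le> w" by (simp add: divide_le_eq mult.commute)
  thus ?thesis unfolding f_def D_def w_def s_def .
qed

end
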